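(* For every sequence $f=(f_m)_{m\ge1}$ and every sequence of test functions $\varphi=(\varphi_m)_{m\ge1}$ (with sufficient smoothness and decay), the weak form defining the BME operator is equivalent to $$\sum_{m\ge1}\int_{\mathbb{R}^n}Q_m(f)\varphi_m\,dv=-\frac14\sum_{m,m_1\ge1}\sum_{m'=1}^{m+m_1-1}(mm_1)^{n/2}\int_{\{(v,v_1,\Omega):(v-v_1)\cdot\Omega\le0\}}B_{m,m_1}(v,v_1,\Omega)\big(\varphi_{m'}(v')+\varphi_{m'_1}(v'_1)-\varphi_m(v)-\varphi_{m_1}(v_1)\big)\Big[\frac{A_{m',m'_1;m}}{(m'm'_1)^{n/2}}f_{m'}(v')f_{m'_1}(v'_1)-\frac{A_{m,m_1;m'}}{(mm_1)^{n/2}}f_m(v)f_{m_1}(v_1)\Big]dv\,dv_1\,d\Omega,$$ where $m'_1=m+m_1-m'$ and $v',v'_1$ are given by the collision rule.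
   Context: Let $n\ge1$ be an integer. Particle masses are positive integers. Given masses $m,m_1\ge1$, an integer $m'\in\{1,\dots,m+m_1-1\}$, $m'_1:=m+m_1-m'$, velocities $v,v_1\in\mathbb{R}^n$ and $\Omega\in\mathbb{S}^{n-1}$ with $\Omega\cdot(v-v_1)\le0$, the collision rule gives $v'=\frac{mv+m_1v_1}{m+m_1}+\frac{(mm_1)^{1/2}}{m+m_1}\big(\frac{m'_1}{m'}\big)^{1/2}\big[v-v_1-2((v-v_1)\cdot\Omega)\Omega\big]$, $v'_1=\frac{mv+m_1v_1}{m+m_1}-\frac{(mm_1)^{1/2}}{m+m_1}\big(\frac{m'}{m'_1}\big)^{1/2}\big[v-v_1-2((v-v_1)\cdot\Omega)\Omega\big]$. Let $A_{m,m_1;m'}\ge0$ satisfy $A_{m,m_1;m'}=A_{m_1,m;m'}=A_{m,m_1;m+m_1-m'}$, and let $\mathbf B\ge0$ be a function on $[0,\infty)\times[-1,1]$; write $B_{m,m_1}(v,v_1,\Omega):=\mathbf B\big(\frac{mm_1}{m+m_1}|v-v_1|^2,\ \Omega\cdot\frac{v-v_1}{|v-v_1|}\big)$. The BME operator $Q(f)=(Q_m(f))_{m\ge1}$ is defined in weak form by: for every test sequence $\varphi$, $$\sum_{m\ge1}\int_{\mathbb{R}^n}Q_m(f)\varphi_m\,dv=\frac12\sum_{m,m_1\ge1}\sum_{m'=1}^{m+m_1-1}A_{m,m_1;m'}\int_{\{(v-v_1)\cdot\Omega\le0\}}B_{m,m_1}(v,v_1,\Omega)\big(\varphi_{m'}(v')+\varphi_{m'_1}(v'_1)-\varphi_m(v)-\varphi_{m_1}(v_1)\big)f_m(v)f_{m_1}(v_1)\,dv\,dv_1\,d\Omega.$$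 *)

theory Defs
  imports "HOL-Analysis.Analysis"
begin

text \<open>Surface (cone) measure on the unit sphere S^{n-1} of a Euclidean space:
  sigma(A) = n * Lebesgue measure of the cone {r x | 0 < r <= 1, x in A}.\<close>
definition sphere_measure :: "('a::euclidean_space) measure" where
  "sphere_measure =
     measure_of (sphere 0 1) (sets (restrict_space borel (sphere 0 1)))
       (\<lambda>A. ennreal (real DIM('a)) *
              emeasure lborel {r *\<^sub>R x | r x. 0 < r \<and> r \<le> 1 \<and> x \<in> A})"

definition post_v :: "nat \<Rightarrow> nat \<Rightarrow> nat \<Rightarrow> 'a::real_inner \<Rightarrow> 'a \<Rightarrow> 'a \<Rightarrow> 'a" where
  "post_v m m1 m' v v1 \<omega> =
     (1 / real (m + m1)) *\<^sub>R (real m *\<^sub>R v + real m1 *\<^sub>R v1)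
     + (sqrt (real m * real m1) / real (m + m1) * sqrt (real (m + m1 - m') / real m'))
       *\<^sub>R (v - v1 - (2 * ((v - v1) \<bullet> \<omega>)) *\<^sub>R \<omega>)"

definition post_v1 :: "nat \<Rightarrow> nat \<Rightarrow> nat \<Rightarrow> 'a::real_inner \<Rightarrow> 'a \<Rightarrow> 'a \<Rightarrow> 'a" where
  "post_v1 m m1 m' v v1 \<omega> =
     (1 / real (m + m1)) *\<^sub>R (real m *\<^sub>R v + real m1 *\<^sub>R v1)
     - (sqrt (real m * real m1) / real (m + m1) * sqrt (real m' / real (m + m1 - m')))
       *\<^sub>R (v - v1 - (2 * ((v - v1) \<bullet> \<omega>)) *\<^sub>R \<omega>)"

definition Bker :: "(real \<Rightarrow> real \<Rightarrow> real) \<Rightarrow> nat \<Rightarrow> nat \<Rightarrow> 'a::real_inner \<Rightarrow> 'a \<Rightarrow> 'a \<Rightarrow> real" where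
  "Bker B m m1 v v1 \<omega> =
     B (real m * real m1 / real (m + m1) * (norm (v - v1))\<^sup>2) (\<omega> \<bullet> ((v - v1) /\<^sub>R norm (v - v1)))"

definition coll_space :: "(('a::euclidean_space \<times> 'a) \<times> 'a) measure" where
  "coll_space = (lborel \<Otimes>\<^sub>M lborel) \<Otimes>\<^sub>M sphere_measure"

definition coll_dom :: "(('a::euclidean_space \<times> 'a) \<times> 'a) set" where
  "coll_dom = {((v, v1), \<omega>). (v - v1) \<bullet> \<omega> \<le> 0}"

definition dphi :: "(nat \<Rightarrow> 'a::real_inner \<Rightarrow> real) \<Rightarrow> nat \<Rightarrow> nat \<Rightarrow> nat \<Rightarrow> 'a \<Rightarrow> 'a \<Rightarrow> 'a \<Rightarrow> real" where
  "dphi \<phi> m m1 m' v v1 \<omega> =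
     \<phi> m' (post_v m m1 m' v v1 \<omega>) + \<phi> (m + m1 - m') (post_v1 m m1 m' v v1 \<omega>)
     - \<phi> m v - \<phi> m1 v1"

definition triples :: "(nat \<times> nat \<times> nat) set" where
  "triples = {(m, m1, m'). 1 \<le> m \<and> 1 \<le> m1 \<and> 1 \<le> m' \<and> m' < m + m1}"

definition weak_form ::
  "(nat \<Rightarrow> nat \<Rightarrow> nat \<Rightarrow> real) \<Rightarrow> (real \<Rightarrow> real \<Rightarrow> real) \<Rightarrow>
   (nat \<Rightarrow> 'a::euclidean_space \<Rightarrow> real) \<Rightarrow> (nat \<Rightarrow> 'a \<Rightarrow> real) \<Rightarrow> real" where
  "weak_form A B f \<phi> =
     1/2 * (\<Sum>\<^sub>\<infinity>(m, m1)\<in>{1..} \<times> {1..}. \<Sum>m' = 1..m + m1 - 1.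
        A m m1 m' *
        (LINT x : coll_dom | coll_space.
           (case x of ((v, v1), \<omega>) \<Rightarrow>
              Bker B m m1 v v1 \<omega> * dphi \<phi> m m1 m' v v1 \<omega> * f m v * f m1 v1)))"

definition sym_form ::
  "(nat \<Rightarrow> nat \<Rightarrow> nat \<Rightarrow> real) \<Rightarrow> (real \<Rightarrow> real \<Rightarrow> real) \<Rightarrow>
   (nat \<Rightarrow> 'a::euclidean_space \<Rightarrow> real) \<Rightarrow> (nat \<Rightarrow> 'a \<Rightarrow> real) \<Rightarrow> real" where
  "sym_form A B f \<phi> =
     - 1/4 * (\<Sum>\<^sub>\<infinity>(m, m1)\<in>{1..} \<times> {1..}. \<Sum>m' = 1..m + m1 - 1.
        (real m * real m1) powr (real DIM('a) / 2) *
        (LINT x : coll_dom | coll_space.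
           (case x of ((v, v1), \<omega>) \<Rightarrow>
              Bker B m m1 v v1 \<omega> * dphi \<phi> m m1 m' v v1 \<omega> *
              (A m' (m + m1 - m') m / (real m' * real (m + m1 - m')) powr (real DIM('a) / 2)
                 * f m' (post_v m m1 m' v v1 \<omega>) * f (m + m1 - m') (post_v1 m m1 m' v v1 \<omega>)
               - A m m1 m' / (real m * real m1) powr (real DIM('a) / 2) * f m v * f m1 v1))))"

end

theory Submission
  imports Defs
begin


lemma sets_sphere_measure:
  "sets (sphere_measure :: 'a::euclidean_space measure) = sets (restrict_space borel (sphere (0::'a) 1))"
proof -
  have "sets (restrict_space borel (sphere (0::'a) 1)) \<subseteq> Pow (sphere 0 1)"
    using sets.sets_into_space by (fastforce simp: space_restrict_space)
  then show ?thesis unfolding sphere_measure_def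
    by (subst sets_measure_of) (auto simp: sets.sigma_sets_eq[of "restrict_space borel (sphere 0 1)", simplified space_restrict_space, simplified])
qed

lemma space_sphere_measure: "space (sphere_measure :: 'a::euclidean_space measure) = sphere 0 1"
  unfolding sphere_measure_def by (simp add: space_measure_of_conv)

lemma lborel_uminus_vimage:
  "emeasure (lborel :: 'a::euclidean_space measure) (uminus -` C) = emeasure lborel C"
proof (cases "C \<in> sets borel")
  case True
  have d: "distr lborel borel (uminus :: 'a \<Rightarrow> 'a) = lborel"
    using lborel_affine[of "-1" "0::'a"] by (simp add: density_1)
  have "emeasure lborel C = emeasure (distr lborel borel (uminus :: 'a \<Rightarrow> 'a)) C" by (simp add: d)
  also have "\<dots> = emeasure lborel (uminus -` C)" using True by (simp add: emeasure_distr)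
  finally show ?thesis ..
next
  case False
  have "uminus -` C \<notin> sets (borel :: 'a measure)"
  proof
    assume "uminus -` C \<in> sets (borel :: 'a measure)"
    then have "uminus -` (uminus -` C) \<in> sets (borel :: 'a measure)"
      by (rule measurable_sets_borel[rotated]) simp
    moreover have "uminus -` (uminus -` C) = C" by auto
    ultimately show False using False by simp
  qed
  then show ?thesis using False by (simp add: emeasure_notin_sets)
qed

lemma meas_sphere_uminus:
  "(uminus :: 'a::euclidean_space \<Rightarrow> 'a) \<in> sphere_measure \<rightarrow>\<^sub>M sphere_measure"
  unfolding measurable_cong_sets[OF sets_sphere_measure sets_sphere_measure]
  by (rule measurable_restrict_space3) auto

lemma meas_sphere_borel:
  "(\<lambda>x::'a::euclidean_space. x) \<in> sphere_measure \<rightarrow>\<^sub>M borel"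
  unfolding measurable_cong_sets[OF sets_sphere_measure refl]
  by (rule measurable_restrict_space1) simp

lemma sphere_measure_uminus:
  "distr sphere_measure sphere_measure uminus = (sphere_measure :: 'a::euclidean_space measure)"
proof (rule measure_eqI)
  show "sets (distr sphere_measure sphere_measure uminus) = sets (sphere_measure :: 'a measure)" by simp
next
  fix X :: "'a set" assume "X \<in> sets (distr sphere_measure sphere_measure uminus)"
  then have X: "X \<in> sets sphere_measure" by simp
  let ?Y = "uminus -` X \<inter> space sphere_measure"
  have Y: "?Y \<in> sets sphere_measure" using meas_sphere_uminus X by (rule measurable_sets)
  define cone where "cone = (\<lambda>A::'a set. {r *\<^sub>R x | r x. 0 < r \<and> r \<le> 1 \<and> x \<in> A})"
  have cc: "cone ?Y = uminus -` cone X"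
  proof (rule set_eqI)
    fix z :: 'a
    have XS: "X \<subseteq> sphere 0 1" using X sets.sets_into_space space_sphere_measure by blast
    show "z \<in> cone ?Y \<longleftrightarrow> z \<in> uminus -` cone X"
    proof
      assume "z \<in> cone ?Y"
      then obtain r x where "z = r *\<^sub>R x" "0 < r" "r \<le> 1" "-x \<in> X" unfolding cone_def by auto
      then show "z \<in> uminus -` cone X" unfolding cone_def
        by (auto intro!: exI[of _ r] exI[of _ "-x"])
    next
      assume "z \<in> uminus -` cone X"
      then obtain r x where "-z = r *\<^sub>R x" "0 < r" "r \<le> 1" "x \<in> X" unfolding cone_def by auto
      moreover have "x \<in> sphere 0 1" using XS \<open>x \<in> X\<close> by blast
      ultimately show "z \<in> cone ?Y" unfolding cone_def space_sphere_measure
        by (auto intro!: exI[of _ r] exI[of _ "-x"] simp: minus_equation_iff[of z])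
    qed
  qed
  have sg: "sigma_sets (sphere (0::'a) 1) (sets (restrict_space borel (sphere 0 1))) = sets sphere_measure"
    using sets_sphere_measure[where 'a='a]
    by (simp add: sets.sigma_sets_eq[of "restrict_space borel (sphere 0 1)", simplified space_restrict_space, simplified])
  have e1: "emeasure (distr sphere_measure sphere_measure uminus) X = emeasure sphere_measure ?Y"
    by (rule emeasure_distr[OF meas_sphere_uminus X])
  define \<mu> where "\<mu> = (\<lambda>A. ennreal (real DIM('a)) * emeasure lborel (cone A))"
  have eq: "sphere_measure = measure_of (sphere 0 1) (sets (restrict_space borel (sphere (0::'a) 1))) \<mu>"
    unfolding sphere_measure_def \<mu>_def cone_def by simp
  have em: "\<And>B. emeasure sphere_measure B = (if B \<in> sets sphere_measure \<and> measure_space (sphere 0 1) (sets sphere_measure) \<mu> then \<mu> B else 0)"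
    unfolding sg[symmetric] by (subst eq) (rule fun_cong[OF emeasure_measure_of_conv])
  have "\<mu> ?Y = \<mu> X" unfolding \<mu>_def cc lborel_uminus_vimage ..
  then have e2: "emeasure sphere_measure ?Y = emeasure sphere_measure X"
    using X Y by (simp only: em)
  show "emeasure (distr sphere_measure sphere_measure uminus) X = emeasure sphere_measure X"
    using e1 e2 by simp
qed

lemma finite_sphere_measure: "finite_measure (sphere_measure :: 'a::euclidean_space measure)"
proof
  have sub: "{r *\<^sub>R x | r x. 0 < r \<and> r \<le> 1 \<and> x \<in> sphere (0::'a) 1} \<subseteq> cball 0 1"
    by auto
  have "emeasure lborel {r *\<^sub>R x | r x. 0 < r \<and> r \<le> 1 \<and> x \<in> sphere (0::'a) 1} \<le> emeasure lborel (cball (0::'a) 1)"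
    by (rule emeasure_mono[OF sub]) simp
  also have "\<dots> < \<infinity>" by (rule emeasure_lborel_cball_finite)
  finally have fin: "emeasure lborel {r *\<^sub>R x | r x. 0 < r \<and> r \<le> 1 \<and> x \<in> sphere (0::'a) 1} < \<infinity>" .
  show "emeasure sphere_measure (space (sphere_measure :: 'a measure)) \<noteq> \<infinity>"
    unfolding space_sphere_measure unfolding sphere_measure_def emeasure_measure_of_conv
    using fin by (auto simp: ennreal_mult_eq_top_iff)
qed



abbreviation NN :: "('a::euclidean_space \<times> 'a) measure" where
  "NN \<equiv> lborel \<Otimes>\<^sub>M lborel"

definition pres :: "('a::euclidean_space \<times> 'a \<Rightarrow> 'a \<times> 'a) \<Rightarrow> ennreal \<Rightarrow> bool" where
  "pres F k \<longleftrightarrow> F \<in> NN \<rightarrow>\<^sub>M NN \<and> (\<forall>X \<in> sets NN. emeasure NN (F -` X) = k * emeasure NN X)"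

lemma space_NN[simp]: "space NN = UNIV"
  by (simp add: space_pair_measure)

lemma pres_comp:
  assumes "pres F k1" "pres G k2" shows "pres (\<lambda>p. G (F p)) (k1 * k2)"
  unfolding pres_def
proof safe
  have F: "F \<in> NN \<rightarrow>\<^sub>M NN" and G: "G \<in> NN \<rightarrow>\<^sub>M NN" using assms unfolding pres_def by auto
  show "(\<lambda>p. G (F p)) \<in> NN \<rightarrow>\<^sub>M NN" using measurable_comp[OF F G] by (simp add: o_def)
  fix X :: "('a \<times> 'a) set" assume X: "X \<in> sets NN"
  have GX: "G -` X \<in> sets NN" using measurable_sets[OF G X] by simp
  have "emeasure NN ((\<lambda>p. G (F p)) -` X) = emeasure NN (F -` (G -` X))" by (simp add: vimage_def)
  also have "\<dots> = k1 * emeasure NN (G -` X)" using assms(1) GX unfolding pres_def by auto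
  also have "\<dots> = k1 * (k2 * emeasure NN X)" using assms(2) X unfolding pres_def by auto
  finally show "emeasure NN ((\<lambda>p. G (F p)) -` X) = k1 * k2 * emeasure NN X" by (simp add: mult.assoc)
qed

lemma pres_cong: "pres F k \<Longrightarrow> (\<And>p. F p = G p) \<Longrightarrow> k = k' \<Longrightarrow> pres G k'"
proof -
  assume "pres F k" "\<And>p. F p = G p" "k = k'"
  then have "F = G" by auto
  then show "pres G k'" using \<open>pres F k\<close> \<open>k = k'\<close> by simp
qed

lemma lborel_translate_vimage:
  fixes c :: "'a::euclidean_space"
  assumes "S \<in> sets borel"
  shows "emeasure lborel ((\<lambda>x. x + c) -` S) = emeasure lborel S"
proof -
  have "emeasure lborel S = emeasure (distr lborel borel ((+) c)) S" by (simp add: lborel_distr_plus)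
  also have "\<dots> = emeasure lborel ((+) c -` S)" using assms by (simp add: emeasure_distr)
  moreover have "(\<lambda>x. x + c) = (+) c" by (auto simp: add.commute)
  ultimately show ?thesis by simp
qed

lemma pres_sh1:
  fixes A :: "'a::euclidean_space \<Rightarrow> 'a"
  assumes [measurable]: "A \<in> borel_measurable borel"
  shows "pres (\<lambda>(x, y). (x + A y, y)) 1"
  unfolding pres_def
proof safe
  show "(\<lambda>(x, y). (x + A y, y)) \<in> NN \<rightarrow>\<^sub>M NN" by measurable
  fix X :: "('a \<times> 'a) set" assume X: "X \<in> sets NN"
  have FX: "(\<lambda>(x, y). (x + A y, y)) -` X \<in> sets NN"
    using measurable_sets[OF _ X, of "\<lambda>(x, y). (x + A y, y)" NN] by simp
  have "emeasure NN ((\<lambda>(x, y). (x + A y, y)) -` X) =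
      (\<integral>\<^sup>+y. emeasure lborel ((\<lambda>x. (x, y)) -` ((\<lambda>(x, y). (x + A y, y)) -` X)) \<partial>lborel)"
    by (rule lborel_pair.emeasure_pair_measure_alt2[OF FX])
  also have "\<dots> = (\<integral>\<^sup>+y. emeasure lborel ((\<lambda>x. (x, y)) -` X) \<partial>lborel)"
  proof (rule nn_integral_cong)
    fix y
    have "(\<lambda>x. (x, y)) -` ((\<lambda>(x, y). (x + A y, y)) -` X) = (\<lambda>x. x + A y) -` ((\<lambda>x. (x, y)) -` X)"
      by auto
    moreover have "(\<lambda>x. (x, y)) -` X \<in> sets borel" using sets_Pair2[OF X] by simp
    ultimately show "emeasure lborel ((\<lambda>x. (x, y)) -` ((\<lambda>(x, y). (x + A y, y)) -` X)) =
        emeasure lborel ((\<lambda>x. (x, y)) -` X)" by (simp add: lborel_translate_vimage)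
  qed
  also have "\<dots> = emeasure NN X" by (rule lborel_pair.emeasure_pair_measure_alt2[OF X, symmetric])
  finally show "emeasure NN ((\<lambda>(x, y). (x + A y, y)) -` X) = 1 * emeasure NN X" by simp
qed

lemma pres_map2:
  fixes G :: "'a::euclidean_space \<Rightarrow> 'a"
  assumes [measurable]: "G \<in> borel_measurable borel"
    and GS: "\<And>S. S \<in> sets borel \<Longrightarrow> emeasure lborel (G -` S) = k * emeasure lborel S"
  shows "pres (\<lambda>(x, y). (x, G y)) k"
  unfolding pres_def
proof safe
  show "(\<lambda>(x, y). (x, G y)) \<in> NN \<rightarrow>\<^sub>M NN" by measurable
  fix X :: "('a \<times> 'a) set" assume X: "X \<in> sets NN"
  have FX: "(\<lambda>(x, y). (x, G y)) -` X \<in> sets NN"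
    using measurable_sets[OF _ X, of "\<lambda>(x, y). (x, G y)" NN] by simp
  have "emeasure NN ((\<lambda>(x, y). (x, G y)) -` X) =
      (\<integral>\<^sup>+x. emeasure lborel (Pair x -` ((\<lambda>(x, y). (x, G y)) -` X)) \<partial>lborel)"
    by (rule lborel.emeasure_pair_measure_alt[OF FX])
  also have "\<dots> = (\<integral>\<^sup>+x. k * emeasure lborel (Pair x -` X) \<partial>lborel)"
  proof (rule nn_integral_cong)
    fix x
    have "Pair x -` ((\<lambda>(x, y). (x, G y)) -` X) = G -` (Pair x -` X)"
      by auto
    moreover have "Pair x -` X \<in> sets borel" using sets_Pair1[OF X] by simp
    ultimately show "emeasure lborel (Pair x -` ((\<lambda>(x, y). (x, G y)) -` X)) =
        k * emeasure lborel (Pair x -` X)" by (simp add: GS)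
  qed
  also have "\<dots> = k * (\<integral>\<^sup>+x. emeasure lborel (Pair x -` X) \<partial>lborel)"
    by (rule nn_integral_cmult) (rule lborel_pair.measurable_emeasure_Pair1[OF X])
  also have "\<dots> = k * emeasure NN X" by (simp add: lborel.emeasure_pair_measure_alt[OF X])
  finally show "emeasure NN ((\<lambda>(x, y). (x, G y)) -` X) = k * emeasure NN X" .
qed

lemma pres_swap: "pres (\<lambda>(x::'a::euclidean_space, y). (y, x)) 1"
  unfolding pres_def
proof safe
  show "(\<lambda>(x::'a, y). (y, x)) \<in> NN \<rightarrow>\<^sub>M NN" by measurable
  fix X :: "('a \<times> 'a) set" assume X: "X \<in> sets NN"
  have "emeasure NN ((\<lambda>(x, y). (y, x)) -` X) = emeasure (distr NN NN (\<lambda>(x, y). (y, x))) X"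
    using X by (subst emeasure_distr) (auto simp: measurable_pair_swap')
  also have "distr NN NN (\<lambda>(x::'a, y). (y, x)) = NN"
    using lborel_pair.distr_pair_swap[symmetric] by simp
  finally show "emeasure NN ((\<lambda>(x, y). (y, x)) -` X) = 1 * emeasure NN X" by simp
qed



lemma pres_sh2:
  fixes A :: "'a::euclidean_space \<Rightarrow> 'a"
  assumes [measurable]: "A \<in> borel_measurable borel"
  shows "pres (\<lambda>(x, y). (x, y + A x)) 1"
proof -
  have "pres (\<lambda>p. (\<lambda>(x::'a, y). (y, x)) ((\<lambda>(x, y). (x + A y, y)) ((\<lambda>(x::'a, y). (y, x)) p))) (1 * 1 * 1)"
    by (intro pres_comp pres_swap pres_sh1) simp
  then show ?thesis by (rule pres_cong) (auto split: prod.splits)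
qed

lemma lborel_scale_vimage:
  fixes c :: real
  assumes c: "c \<noteq> 0" and S: "S \<in> sets (borel :: 'a::euclidean_space measure)"
  shows "emeasure lborel ((\<lambda>x::'a. c *\<^sub>R x) -` S) = ennreal (1 / \<bar>c\<bar> ^ DIM('a)) * emeasure lborel S"
proof -
  have "emeasure lborel S = emeasure (density (distr lborel borel (\<lambda>x::'a. 0 + c *\<^sub>R x)) (\<lambda>_. \<bar>c\<bar>^DIM('a))) S"
    using lborel_affine[OF c, of "0::'a"] by simp
  also have "\<dots> = ennreal (\<bar>c\<bar>^DIM('a)) * emeasure (distr lborel borel (\<lambda>x::'a. 0 + c *\<^sub>R x)) S"
    using S by (simp add: emeasure_density nn_integral_cmult_indicator)
  also have "\<dots> = ennreal (\<bar>c\<bar>^DIM('a)) * emeasure lborel ((\<lambda>x::'a. c *\<^sub>R x) -` S)"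
    using S by (simp add: emeasure_distr)
  finally have e: "emeasure lborel S = ennreal (\<bar>c\<bar>^DIM('a)) * emeasure lborel ((\<lambda>x::'a. c *\<^sub>R x) -` S)" .
  have "ennreal (1 / \<bar>c\<bar> ^ DIM('a)) * emeasure lborel S
      = ennreal (1 / \<bar>c\<bar> ^ DIM('a)) * ennreal (\<bar>c\<bar>^DIM('a)) * emeasure lborel ((\<lambda>x::'a. c *\<^sub>R x) -` S)"
    by (simp add: e mult.assoc)
  also have "ennreal (1 / \<bar>c\<bar> ^ DIM('a)) * ennreal (\<bar>c\<bar>^DIM('a)) = 1"
    using c by (simp add: ennreal_mult''[symmetric])
  finally show ?thesis by simp
qed

lemma pres_scale2:
  fixes c :: real
  assumes c: "c \<noteq> 0"
  shows "pres (\<lambda>(x::'a::euclidean_space, y). (x, c *\<^sub>R y)) (ennreal (1 / \<bar>c\<bar> ^ DIM('a)))"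
  by (rule pres_map2) (auto simp: lborel_scale_vimage c)

lemma ennreal_sq_cancel:
  fixes x y :: ennreal
  assumes "x * x = y * y" "y < \<infinity>"
  shows "x = y"
proof -
  obtain b where b: "y = ennreal b" "0 \<le> b" using assms(2) by (cases y) auto
  have "x \<noteq> \<infinity>"
  proof
    assume "x = \<infinity>" then have "y * y = \<infinity>" using assms(1) by simp
    then show False using b by (simp add: ennreal_mult''[symmetric])
  qed
  then obtain a where a: "x = ennreal a" "0 \<le> a" by (cases x) auto
  have "ennreal (a * a) = ennreal (b * b)" using assms(1) a b by (simp add: ennreal_mult''[symmetric])
  then have "a * a = b * b" using a b by (simp add: ennreal_inj)
  then have "a = b" using a b by (metis abs_of_nonneg power2_eq_square real_sqrt_abs)
  then show ?thesis using a b by simp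
qed

definition refl :: "'a::real_inner \<Rightarrow> 'a \<Rightarrow> 'a" where
  "refl \<omega> w = w - (2 * (w \<bullet> \<omega>)) *\<^sub>R \<omega>"

lemma refl_meas[measurable]: "refl \<omega> \<in> borel_measurable borel"
  unfolding refl_def by (rule borel_measurable_continuous_onI) (intro continuous_intros)

lemma refl_refl: "norm \<omega> = 1 \<Longrightarrow> refl \<omega> (refl \<omega> w) = w"
  unfolding refl_def by (simp add: algebra_simps inner_diff_left dot_square_norm)

lemma refl_lin: "refl \<omega> (x + y) = refl \<omega> x + refl \<omega> y" "refl \<omega> (- x) = - refl \<omega> x"
   "refl \<omega> (x - y) = refl \<omega> x - refl \<omega> y"
  unfolding refl_def by (simp_all add: algebra_simps inner_add_left inner_diff_left)

lemma pres_diag_refl: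
  fixes \<omega> :: "'a::euclidean_space"
  assumes \<omega>: "norm \<omega> = 1"
  shows "pres (\<lambda>(x, y). (refl \<omega> x, refl \<omega> y)) 1"
proof -
  let ?R = "refl \<omega>"
  have J: "pres (\<lambda>p. (\<lambda>(x::'a, y). (x + - y, y)) ((\<lambda>(x, y). (x, y + x)) ((\<lambda>(x, y). (x + - y, y)) p))) (1 * 1 * 1)"
    by (intro pres_comp pres_sh1 pres_sh2) simp_all
  have W: "pres (\<lambda>p. (\<lambda>(x::'a, y). (x + ?R y, y)) ((\<lambda>(x, y). (x, y + - ?R x)) ((\<lambda>(x, y). (x + ?R y, y)) p))) (1 * 1 * 1)"
    by (intro pres_comp pres_sh1 pres_sh2) simp_all
  have "pres (\<lambda>p. (\<lambda>p. (\<lambda>(x::'a, y). (x + ?R y, y)) ((\<lambda>(x, y). (x, y + - ?R x)) ((\<lambda>(x, y). (x + ?R y, y)) p)))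
      ((\<lambda>p. (\<lambda>(x::'a, y). (x + - y, y)) ((\<lambda>(x, y). (x, y + x)) ((\<lambda>(x, y). (x + - y, y)) p))) p)) ((1 * 1 * 1) * (1 * 1 * 1))"
    by (rule pres_comp[OF J W])
  then show ?thesis
    by (rule pres_cong) (auto simp: refl_lin refl_refl[OF \<omega>] split: prod.splits)
qed

lemma lborel_refl_vimage:
  fixes \<omega> :: "'a::euclidean_space"
  assumes \<omega>: "norm \<omega> = 1" and S: "S \<in> sets borel"
  shows "emeasure lborel (refl \<omega> -` S) = emeasure lborel S"
proof -
  have P: "pres (\<lambda>(x, y). (refl \<omega> x, refl \<omega> y)) 1" by (rule pres_diag_refl[OF \<omega>])
  have box: "emeasure lborel (refl \<omega> -` box l u) = emeasure lborel (box l u)" for l u :: 'a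
  proof -
    have B: "box l u \<times> box l u \<in> sets NN" by simp
    have B': "refl \<omega> -` box l u \<in> sets borel" by (rule measurable_sets_borel[OF refl_meas]) simp
    have "emeasure NN ((\<lambda>(x, y). (refl \<omega> x, refl \<omega> y)) -` (box l u \<times> box l u)) = emeasure NN (box l u \<times> box l u)"
      using P B unfolding pres_def by auto
    moreover have "(\<lambda>(x, y). (refl \<omega> x, refl \<omega> y)) -` (box l u \<times> box l u) = refl \<omega> -` box l u \<times> refl \<omega> -` box l u"
      by auto
    ultimately have "emeasure lborel (refl \<omega> -` box l u) * emeasure lborel (refl \<omega> -` box l u)
        = emeasure lborel (box l u) * emeasure lborel (box l u)"
      using B' by (simp add: lborel.emeasure_pair_measure_Times)
    then show ?thesis by (rule ennreal_sq_cancel) (simp add: emeasure_lborel_box_eq)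
  qed
  have "lborel = distr lborel borel (refl \<omega>)"
  proof (rule lborel_eqI)
    fix l u :: 'a assume "\<And>b. b \<in> Basis \<Longrightarrow> l \<bullet> b \<le> u \<bullet> b"
    then show "emeasure (distr lborel borel (refl \<omega>)) (box l u) = (\<Prod>b\<in>Basis. (u - l) \<bullet> b)"
      by (simp add: emeasure_distr box emeasure_lborel_box_eq)
  qed simp
  then have "emeasure lborel S = emeasure (distr lborel borel (refl \<omega>)) S" by simp
  also have "\<dots> = emeasure lborel (refl \<omega> -` S)" using S by (simp add: emeasure_distr)
  finally show ?thesis ..
qed



lemma pres_refl2:
  fixes \<omega> :: "'a::euclidean_space"
  assumes "norm \<omega> = 1"
  shows "pres (\<lambda>(x, y). (x, refl \<omega> y)) 1"
  by (rule pres_map2) (auto simp: lborel_refl_vimage[OF assms])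

lemma pres_L:
  fixes \<omega> :: "'a::euclidean_space" and \<alpha> a b :: real
  assumes \<omega>: "norm \<omega> = 1" and s: "a + b \<noteq> 0"
  shows "pres (\<lambda>(v, v1). (v - \<alpha> *\<^sub>R (v - v1) + a *\<^sub>R refl \<omega> (v - v1),
                        v - \<alpha> *\<^sub>R (v - v1) - b *\<^sub>R refl \<omega> (v - v1)))
              (ennreal (1 / \<bar>a + b\<bar> ^ DIM('a)))"
proof -
  let ?s = "a + b"
  have p1: "pres (\<lambda>(x::'a, y). (x, (-1::real) *\<^sub>R y)) 1"
    using pres_scale2[of "-1::real", where 'a='a] by simp
  have p2: "pres (\<lambda>(x::'a, y). (x, y + x)) 1" by (rule pres_sh2) simp
  have p3: "pres (\<lambda>(x::'a, y). (x + (- \<alpha>) *\<^sub>R y, y)) 1" by (rule pres_sh1) simp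
  have p4: "pres (\<lambda>(x::'a, y). (x, refl \<omega> y)) 1" by (rule pres_refl2[OF \<omega>])
  have p5: "pres (\<lambda>(x::'a, y). (x, ?s *\<^sub>R y)) (ennreal (1 / \<bar>a + b\<bar> ^ DIM('a)))"
    by (rule pres_scale2[OF s])
  have p6: "pres (\<lambda>(x::'a, y). (x + (a / ?s) *\<^sub>R y, y)) 1" by (rule pres_sh1) simp
  have p7: "pres (\<lambda>(x::'a, y). (x, y + - x)) 1" by (rule pres_sh2) simp
  have p8: "pres (\<lambda>(x::'a, y). (x, (-1::real) *\<^sub>R y)) 1"
    using pres_scale2[of "-1::real", where 'a='a] by simp
  have "pres (\<lambda>p. (\<lambda>(x::'a, y). (x, (-1::real) *\<^sub>R y)) ((\<lambda>(x::'a, y). (x, y + - x)) ((\<lambda>(x::'a, y). (x + (a / ?s) *\<^sub>R y, y))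
     ((\<lambda>(x::'a, y). (x, ?s *\<^sub>R y)) ((\<lambda>(x::'a, y). (x, refl \<omega> y)) ((\<lambda>(x::'a, y). (x + (- \<alpha>) *\<^sub>R y, y))
     ((\<lambda>(x::'a, y). (x, y + x)) ((\<lambda>(x::'a, y). (x, (-1::real) *\<^sub>R y)) p))))))))
     (1 * 1 * 1 * 1 * ennreal (1 / \<bar>a + b\<bar> ^ DIM('a)) * 1 * 1 * 1)"
    by (intro pres_comp p1 p2 p3 p4 p5 p6 p7 p8)
  then show ?thesis
  proof (rule pres_cong)
    fix p :: "'a \<times> 'a"
    obtain v v1 where p: "p = (v, v1)" by (cases p)
    have e1: "(a / ?s) *\<^sub>R (?s *\<^sub>R refl \<omega> (v - v1)) = a *\<^sub>R refl \<omega> (v - v1)"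
      using s by simp
    show "(\<lambda>(x::'a, y). (x, (-1::real) *\<^sub>R y)) ((\<lambda>(x::'a, y). (x, y + - x)) ((\<lambda>(x::'a, y). (x + (a / ?s) *\<^sub>R y, y))
     ((\<lambda>(x::'a, y). (x, ?s *\<^sub>R y)) ((\<lambda>(x::'a, y). (x, refl \<omega> y)) ((\<lambda>(x::'a, y). (x + (- \<alpha>) *\<^sub>R y, y))
     ((\<lambda>(x::'a, y). (x, y + x)) ((\<lambda>(x::'a, y). (x, (-1::real) *\<^sub>R y)) p))))))) =
     (\<lambda>(v, v1). (v - \<alpha> *\<^sub>R (v - v1) + a *\<^sub>R refl \<omega> (v - v1),
                        v - \<alpha> *\<^sub>R (v - v1) - b *\<^sub>R refl \<omega> (v - v1))) p"
      unfolding p using e1 by (simp add: algebra_simps)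
  qed simp
qed



lemma coll_sets: "coll_space = NN \<Otimes>\<^sub>M (sphere_measure :: 'a::euclidean_space measure)"
  by (simp add: coll_space_def)

interpretation sph: finite_measure "sphere_measure :: 'a::euclidean_space measure"
  by (rule finite_sphere_measure)

lemma pair_sf: "pair_sigma_finite (NN :: ('a::euclidean_space \<times> 'a) measure) (sphere_measure :: 'a measure)"
proof -
  interpret NNs: sigma_finite_measure "NN :: ('a \<times> 'a) measure"
    by (rule lborel_pair.sigma_finite_measure_axioms)
  show ?thesis by unfold_locales
qed

lemma coll_distr:
  fixes L :: "'a::euclidean_space \<Rightarrow> 'a \<times> 'a \<Rightarrow> 'a \<times> 'a" and r :: real
  assumes T[measurable]: "(\<lambda>(p, \<omega>). (L \<omega> p, - \<omega>)) \<in> coll_space \<rightarrow>\<^sub>M coll_space"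
    and P: "\<And>\<omega>. \<omega> \<in> sphere 0 1 \<Longrightarrow> pres (L \<omega>) (ennreal r)"
    and r: "0 \<le> r"
  shows "distr coll_space coll_space (\<lambda>(p, \<omega>). (L \<omega> p, - \<omega>)) = density coll_space (\<lambda>_. ennreal r)"
proof (rule measure_eqI)
  interpret PS: pair_sigma_finite "NN :: ('a \<times> 'a) measure" "sphere_measure :: 'a measure" by (rule pair_sf)
  let ?T = "\<lambda>(p, \<omega>). (L \<omega> p, - \<omega>)"
  show "sets (distr coll_space coll_space ?T) = sets (density coll_space (\<lambda>_. ennreal r))" by simp
  fix X assume "X \<in> sets (distr coll_space coll_space ?T)"
  then have X: "X \<in> sets (NN \<Otimes>\<^sub>M sphere_measure)" by (simp add: coll_space_def)
  have TX: "?T -` X \<inter> space (NN \<Otimes>\<^sub>M sphere_measure) \<in> sets (NN \<Otimes>\<^sub>M sphere_measure)"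
    using measurable_sets[OF T, of X] X by (simp add: coll_space_def)
  have hm: "(\<lambda>\<omega>. emeasure NN ((\<lambda>p. (p, \<omega>)) -` X)) \<in> borel_measurable sphere_measure"
    by (rule PS.measurable_emeasure_Pair2[OF X])
  have "emeasure (distr coll_space coll_space ?T) X = emeasure (NN \<Otimes>\<^sub>M sphere_measure) (?T -` X \<inter> space (NN \<Otimes>\<^sub>M sphere_measure))"
    using X by (subst emeasure_distr[OF T]) (simp_all add: coll_space_def)
  also have "\<dots> = (\<integral>\<^sup>+\<omega>. emeasure NN ((\<lambda>p. (p, \<omega>)) -` (?T -` X \<inter> space (NN \<Otimes>\<^sub>M sphere_measure))) \<partial>sphere_measure)"
    by (rule PS.emeasure_pair_measure_alt2[OF TX])
  also have "\<dots> = (\<integral>\<^sup>+\<omega>. ennreal r * emeasure NN ((\<lambda>p. (p, - \<omega>)) -` X) \<partial>sphere_measure)"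
  proof (rule nn_integral_cong)
    fix \<omega> :: 'a assume \<omega>: "\<omega> \<in> space sphere_measure"
    then have \<omega>': "\<omega> \<in> sphere 0 1" by (simp add: space_sphere_measure)
    have "(\<lambda>p. (p, \<omega>)) -` (?T -` X \<inter> space (NN \<Otimes>\<^sub>M sphere_measure)) = L \<omega> -` ((\<lambda>p. (p, - \<omega>)) -` X)"
      using \<omega> by (auto simp: space_pair_measure)
    moreover have "(\<lambda>p. (p, - \<omega>)) -` X \<in> sets NN" by (rule sets_Pair2[OF X])
    ultimately show "emeasure NN ((\<lambda>p. (p, \<omega>)) -` (?T -` X \<inter> space (NN \<Otimes>\<^sub>M sphere_measure))) =
        ennreal r * emeasure NN ((\<lambda>p. (p, - \<omega>)) -` X)"
      using P[OF \<omega>'] unfolding pres_def by auto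
  qed
  also have "\<dots> = ennreal r * (\<integral>\<^sup>+\<omega>. emeasure NN ((\<lambda>p. (p, - \<omega>)) -` X) \<partial>sphere_measure)"
    by (rule nn_integral_cmult) (rule measurable_compose[OF meas_sphere_uminus hm])
  also have "(\<integral>\<^sup>+\<omega>. emeasure NN ((\<lambda>p. (p, - \<omega>)) -` X) \<partial>sphere_measure)
      = (\<integral>\<^sup>+\<omega>. emeasure NN ((\<lambda>p. (p, \<omega>)) -` X) \<partial>distr sphere_measure sphere_measure uminus)"
    by (rule nn_integral_distr[OF meas_sphere_uminus, symmetric]) (simp add: sphere_measure_uminus hm)
  also have "\<dots> = emeasure (NN \<Otimes>\<^sub>M sphere_measure) X"
    unfolding sphere_measure_uminus by (rule PS.emeasure_pair_measure_alt2[OF X, symmetric])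
  also have "ennreal r * emeasure (NN \<Otimes>\<^sub>M sphere_measure) X = emeasure (density coll_space (\<lambda>_. ennreal r)) X"
    using X by (simp add: emeasure_density nn_integral_cmult_indicator coll_space_def)
  finally show "emeasure (distr coll_space coll_space ?T) X = emeasure (density coll_space (\<lambda>_. ennreal r)) X" .
qed

lemma coll_integral:
  fixes L :: "'a::euclidean_space \<Rightarrow> 'a \<times> 'a \<Rightarrow> 'a \<times> 'a" and r :: real
    and g :: "('a \<times> 'a) \<times> 'a \<Rightarrow> real"
  assumes T[measurable]: "(\<lambda>(p, \<omega>). (L \<omega> p, - \<omega>)) \<in> coll_space \<rightarrow>\<^sub>M coll_space"
    and P: "\<And>\<omega>. \<omega> \<in> sphere 0 1 \<Longrightarrow> pres (L \<omega>) (ennreal r)"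
    and r: "0 \<le> r"
    and g: "integrable coll_space g"
  shows "integrable coll_space (\<lambda>x. g ((\<lambda>(p, \<omega>). (L \<omega> p, - \<omega>)) x))"
    and "integral\<^sup>L coll_space (\<lambda>x. g ((\<lambda>(p, \<omega>). (L \<omega> p, - \<omega>)) x)) = r * integral\<^sup>L coll_space g"
proof -
  let ?T = "\<lambda>(p, \<omega>). (L \<omega> p, - \<omega>)"
  have gm[measurable]: "g \<in> borel_measurable coll_space" using g by auto
  have D: "distr coll_space coll_space ?T = density coll_space (\<lambda>_. ennreal r)"
    by (rule coll_distr[OF T P r])
  have "integrable (density coll_space (\<lambda>_. ennreal r)) g"
    using g by (subst integrable_density) (auto intro: integrable_mult_right simp: r)
  then have "integrable (distr coll_space coll_space ?T) g" by (simp add: D)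
  then show "integrable coll_space (\<lambda>x. g (?T x))"
    by (subst (asm) integrable_distr_eq) simp_all
  have "integral\<^sup>L coll_space (\<lambda>x. g (?T x)) = integral\<^sup>L (distr coll_space coll_space ?T) g"
    by (rule integral_distr[symmetric]) simp_all
  also have "\<dots> = integral\<^sup>L (density coll_space (\<lambda>_. ennreal r)) g" by (simp add: D)
  also have "\<dots> = integral\<^sup>L coll_space (\<lambda>x. r *\<^sub>R g x)"
    using r by (subst integral_density) simp_all
  finally show "integral\<^sup>L coll_space (\<lambda>x. g (?T x)) = r * integral\<^sup>L coll_space g" by simp
qed



lemma scal_facts:
  fixes p p1 q q1 :: real
  assumes pos: "0 < p" "0 < p1" "0 < q" "0 < q1" and M: "p + p1 = q + q1"
  defines "a \<equiv> sqrt (p * p1) / (p + p1) * sqrt (q1 / q)"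
    and "b \<equiv> sqrt (p * p1) / (p + p1) * sqrt (q / q1)"
    and "a' \<equiv> sqrt (q * q1) / (q + q1) * sqrt (p1 / p)"
    and "b' \<equiv> sqrt (q * q1) / (q + q1) * sqrt (p / p1)"
  shows "q * a = q1 * b" "a + b = sqrt (p * p1) / sqrt (q * q1)"
    "a' * (a + b) = p1 / (p + p1)" "b' * (a + b) = p / (p + p1)" "0 < a + b"
proof -
  obtain P P1 Q Q1 where PP: "P = sqrt p" "P1 = sqrt p1" "Q = sqrt q" "Q1 = sqrt q1" by blast
  have sq: "p = P^2" "p1 = P1^2" "q = Q^2" "q1 = Q1^2" using PP pos by simp_all
  have ps: "0 < P" "0 < P1" "0 < Q" "0 < Q1" using PP pos by simp_all
  have r: "sqrt (p * p1) = P * P1" "sqrt (q * q1) = Q * Q1" "sqrt (q1 / q) = Q1 / Q" "sqrt (q / q1) = Q / Q1"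
     "sqrt (p1 / p) = P1 / P" "sqrt (p / p1) = P / P1"
    using PP by (simp_all add: real_sqrt_mult real_sqrt_divide)
  have M': "P^2 + P1^2 = Q^2 + Q1^2" using M sq by simp
  have Mpos: "P^2 + P1^2 \<noteq> 0" using ps by (metis add_pos_pos less_irrefl zero_less_power)
  have Qn: "Q^2 + Q1^2 \<noteq> 0" using ps by (metis add_pos_pos less_irrefl zero_less_power)
  define X where "X = P * P1 / (P^2 + P1^2)"
  have aa: "a = X * (Q1 / Q)" unfolding a_def X_def r unfolding sq ..
  have bb: "b = X * (Q / Q1)" unfolding b_def X_def r unfolding sq ..
  have aa': "a' = Q * Q1 / (P^2 + P1^2) * (P1 / P)" unfolding a'_def r unfolding sq M' ..
  have bb': "b' = Q * Q1 / (P^2 + P1^2) * (P / P1)" unfolding b'_def r unfolding sq M' ..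
  show "q * a = q1 * b" unfolding aa bb sq using ps by (simp add: field_simps power2_eq_square)
  have "a + b = X * ((Q1^2 + Q^2) / (Q * Q1))" unfolding aa bb using ps by (simp add: field_simps power2_eq_square)
  also have "\<dots> = P * P1 / (Q * Q1)" unfolding X_def using M' Mpos by (simp add: add.commute)
  finally have ab: "a + b = P * P1 / (Q * Q1)" .
  then show "a + b = sqrt (p * p1) / sqrt (q * q1)" unfolding r .
  show "0 < a + b" using ab ps by simp
  have "a' * (a + b) = (P * Q * Q1) / (P * Q * Q1) * (P1^2 / (P^2 + P1^2))"
    unfolding ab aa' by (simp add: power2_eq_square)
  then show "a' * (a + b) = p1 / (p + p1)" unfolding sq using ps by simp
  have "b' * (a + b) = (P1 * Q * Q1) / (P1 * Q * Q1) * (P^2 / (P^2 + P1^2))"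
    unfolding ab bb' by (simp add: power2_eq_square)
  then show "b' * (a + b) = p / (p + p1)" unfolding sq using ps by simp
qed



lemma center_eq:
  fixes v v1 :: "'a::real_vector"
  assumes "0 < m + m1"
  shows "(1 / real (m + m1)) *\<^sub>R (real m *\<^sub>R v + real m1 *\<^sub>R v1) = v - (real m1 / real (m + m1)) *\<^sub>R (v - v1)"
proof -
  have "0 < real (m + m1)" using assms by (simp only: of_nat_0_less_iff)
  then have M: "real (m + m1) \<noteq> 0" by linarith
  have "v - (real m1 / real (m + m1)) *\<^sub>R (v - v1) = (1 - real m1 / real (m + m1)) *\<^sub>R v + (real m1 / real (m + m1)) *\<^sub>R v1"
    by (simp add: algebra_simps)
  also have "1 - real m1 / real (m + m1) = real m / real (m + m1)" using M by (simp add: field_simps)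
  finally show ?thesis by (simp add: scaleR_add_right divide_inverse_commute)
qed

lemma refl_scale: "refl \<omega> (s *\<^sub>R x) = s *\<^sub>R refl \<omega> x"
  unfolding refl_def by (simp add: algebra_simps)

lemma refl_neg: "refl (- \<omega>) = refl \<omega>"
  unfolding refl_def by (simp add: fun_eq_iff)

lemma refl_inner: "norm \<omega> = 1 \<Longrightarrow> refl \<omega> x \<bullet> \<omega> = - (x \<bullet> \<omega>)"
  unfolding refl_def by (simp add: inner_diff_left dot_square_norm)

lemma refl_norm: "norm \<omega> = 1 \<Longrightarrow> norm (refl \<omega> x) = norm x"
proof -
  assume w: "norm \<omega> = 1"
  have "refl \<omega> x \<bullet> refl \<omega> x = x \<bullet> x"
  proof -
    have ww: "\<omega> \<bullet> \<omega> = 1" using w by (simp add: dot_square_norm)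
    show ?thesis unfolding refl_def
      by (simp add: inner_diff_left inner_diff_right ww inner_commute[of \<omega> x] algebra_simps)
  qed
  then show ?thesis by (simp add: norm_eq_sqrt_inner)
qed

lemma post_v_eq: "post_v m m1 m' v v1 \<omega> =
   (1 / real (m + m1)) *\<^sub>R (real m *\<^sub>R v + real m1 *\<^sub>R v1) +
   (sqrt (real m * real m1) / real (m + m1) * sqrt (real (m + m1 - m') / real m')) *\<^sub>R refl \<omega> (v - v1)"
  unfolding post_v_def refl_def ..

lemma post_v1_eq: "post_v1 m m1 m' v v1 \<omega> =
   (1 / real (m + m1)) *\<^sub>R (real m *\<^sub>R v + real m1 *\<^sub>R v1) -
   (sqrt (real m * real m1) / real (m + m1) * sqrt (real m' / real (m + m1 - m'))) *\<^sub>R refl \<omega> (v - v1)"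
  unfolding post_v1_def refl_def ..



lemma inner_aux: "(- \<omega>) \<bullet> ((s *\<^sub>R x) /\<^sub>R (s * r)) = - (s * (x \<bullet> \<omega>)) / (s * r)"
  for \<omega> x :: "'a::real_inner"
  by (simp add: inner_commute divide_inverse mult_ac)

lemma coll_rev:
  fixes v v1 \<omega> :: "'a::euclidean_space"
  assumes t: "(m, m1, m') \<in> triples" and \<omega>: "norm \<omega> = 1"
  defines "mm \<equiv> m + m1 - m'"
    and "u \<equiv> post_v m m1 m' v v1 \<omega>" and "u1 \<equiv> post_v1 m m1 m' v v1 \<omega>"
  shows "post_v m' mm m u u1 (- \<omega>) = v" "post_v1 m' mm m u u1 (- \<omega>) = v1" "m' + mm - m = m1"
    "Bker B m' mm u u1 (- \<omega>) = Bker B m m1 v v1 \<omega>"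
    "(u - u1) \<bullet> (- \<omega>) \<le> 0 \<longleftrightarrow> (v - v1) \<bullet> \<omega> \<le> 0"
proof -
  have tt: "1 \<le> m" "1 \<le> m1" "1 \<le> m'" "m' < m + m1" using t by (auto simp: triples_def)
  have mmM: "m' + mm = m + m1" and mm1: "1 \<le> mm" using tt by (auto simp: mm_def)
  show c3: "m' + mm - m = m1" using mmM by simp
  define p where "p = real m"
  define p1 where "p1 = real m1"
  define q where "q = real m'"
  define q1 where "q1 = real mm"
  define M where "M = p + p1"
  have pos: "0 < p" "0 < p1" "0 < q" "0 < q1" using tt mm1 by (auto simp: p_def p1_def q_def q1_def)
  have Mq: "p + p1 = q + q1" unfolding p_def p1_def q_def q1_def using mmM
    by (metis of_nat_add)
  have Mpos: "0 < M" using pos by (simp add: M_def)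
  define a where "a \<equiv> sqrt (p * p1) / (p + p1) * sqrt (q1 / q)"
  define b where "b \<equiv> sqrt (p * p1) / (p + p1) * sqrt (q / q1)"
  define a' where "a' \<equiv> sqrt (q * q1) / (q + q1) * sqrt (p1 / p)"
  define b' where "b' \<equiv> sqrt (q * q1) / (q + q1) * sqrt (p / p1)"
  note sf = scal_facts[OF pos Mq, folded a_def b_def a'_def b'_def]
  define w where "w = v - v1"
  define c where "c = v - (p1 / M) *\<^sub>R w"
  have RM: "real (m + m1) = M" by (simp add: M_def p_def p1_def)
  have RM': "real (m' + mm) = M" using RM mmM by simp
  have ce: "(1 / real (m + m1)) *\<^sub>R (real m *\<^sub>R v + real m1 *\<^sub>R v1) = c"
    unfolding c_def w_def M_def p_def p1_def using center_eq[of m m1 v v1] tt by simp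
  have hu: "u = c + a *\<^sub>R refl \<omega> w"
    unfolding u_def post_v_eq ce unfolding a_def p_def p1_def q_def q1_def mm_def w_def by simp
  have hu1: "u1 = c - b *\<^sub>R refl \<omega> w"
    unfolding u1_def post_v1_eq ce unfolding b_def p_def p1_def q_def q1_def mm_def w_def by simp
  have hd: "u - u1 = (a + b) *\<^sub>R refl \<omega> w" unfolding hu hu1 by (simp add: algebra_simps)
  have hR: "refl (- \<omega>) (u - u1) = (a + b) *\<^sub>R w" unfolding hd refl_neg refl_scale refl_refl[OF \<omega>] ..
  have cen0: "a - q1 / M * (a + b) = 0"
  proof -
    have "M * a - q1 * (a + b) = q * a - q1 * b" unfolding M_def Mq by (simp add: algebra_simps)
    then have "M * a - q1 * (a + b) = 0" using sf(1) by simp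
    then show ?thesis using Mpos by (simp add: field_simps)
  qed
  have cen: "u - (q1 / M) *\<^sub>R (u - u1) = c"
  proof -
    have "u - (q1 / M) *\<^sub>R (u - u1) = c + (a - q1 / M * (a + b)) *\<^sub>R refl \<omega> w"
    proof -
      have "(a - q1 / M * (a + b)) *\<^sub>R refl \<omega> w = a *\<^sub>R refl \<omega> w - (q1 / M) *\<^sub>R ((a + b) *\<^sub>R refl \<omega> w)"
        by (simp only: scaleR_diff_left scaleR_scaleR)
      then show ?thesis unfolding hd unfolding hu by (simp add: algebra_simps)
    qed
    then show ?thesis using cen0 by simp
  qed
  have ce': "(1 / real (m' + mm)) *\<^sub>R (real m' *\<^sub>R u + real mm *\<^sub>R u1) = u - (q1 / M) *\<^sub>R (u - u1)"
    unfolding RM'[symmetric] q1_def using center_eq[of m' mm u u1] tt by simp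
  have "post_v m' mm m u u1 (- \<omega>) = (u - (q1 / M) *\<^sub>R (u - u1)) + a' *\<^sub>R refl (- \<omega>) (u - u1)"
    unfolding post_v_eq ce' c3 unfolding a'_def RM' p_def p1_def q_def q1_def using Mq by (simp add: M_def p_def p1_def q_def q1_def)
  also have "\<dots> = c + (a' * (a + b)) *\<^sub>R w" unfolding cen hR by simp
  also have "\<dots> = v" unfolding sf(3) c_def M_def by simp
  finally show "post_v m' mm m u u1 (- \<omega>) = v" .
  have "post_v1 m' mm m u u1 (- \<omega>) = (u - (q1 / M) *\<^sub>R (u - u1)) - b' *\<^sub>R refl (- \<omega>) (u - u1)"
    unfolding post_v1_eq ce' c3 unfolding b'_def RM' p_def p1_def q_def q1_def using Mq by (simp add: M_def p_def p1_def q_def q1_def)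
  also have "\<dots> = c - (b' * (a + b)) *\<^sub>R w" unfolding cen hR by simp
  also have "\<dots> = v - ((p1 / M) + (p / M)) *\<^sub>R w" unfolding sf(4) c_def M_def by (simp add: algebra_simps)
  also have "(p1 / M) + (p / M) = 1"
  proof -
    have "(p1 / M) + (p / M) = M / M" by (simp add: add_divide_distrib[symmetric] M_def add.commute)
    then show ?thesis using Mpos by simp
  qed
  finally show "post_v1 m' mm m u u1 (- \<omega>) = v1" by (simp add: w_def)
  show "(u - u1) \<bullet> (- \<omega>) \<le> 0 \<longleftrightarrow> (v - v1) \<bullet> \<omega> \<le> 0"
    unfolding hd using sf(5) refl_inner[OF \<omega>] by (simp add: w_def mult_le_0_iff)
  show "Bker B m' mm u u1 (- \<omega>) = Bker B m m1 v v1 \<omega>"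
  proof -
    have n: "norm (u - u1) = (a + b) * norm w" unfolding hd using sf(5) by (simp add: refl_norm[OF \<omega>])
    have sq: "(a + b)^2 = p * p1 / (q * q1)" unfolding sf(2) using pos
      by (simp add: power_divide)
    have arg1: "real m' * real mm / real (m' + mm) * (norm (u - u1))\<^sup>2 = real m * real m1 / real (m + m1) * (norm (v - v1))\<^sup>2"
    proof -
      have "real m' * real mm / real (m' + mm) * (norm (u - u1))\<^sup>2 = q * q1 / M * (a + b)^2 * (norm w)^2"
        unfolding n RM' q_def q1_def by (simp add: power_mult_distrib)
      also have "\<dots> = p * p1 / M * (norm w)^2" unfolding sq using pos by simp
      finally show ?thesis unfolding RM by (simp add: p_def p1_def w_def)
    qed
    have arg2: "(- \<omega>) \<bullet> ((u - u1) /\<^sub>R norm (u - u1)) = \<omega> \<bullet> ((v - v1) /\<^sub>R norm (v - v1))"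
    proof (cases "w = 0")
      case True
      then show ?thesis unfolding hd by (simp add: w_def refl_def)
    next
      case False
      then have nw: "norm w \<noteq> 0" by simp
      have "(- \<omega>) \<bullet> ((u - u1) /\<^sub>R norm (u - u1)) = - ((a + b) * (refl \<omega> w \<bullet> \<omega>)) / ((a + b) * norm w)"
        unfolding n unfolding hd by (rule inner_aux)
      also have "\<dots> = (w \<bullet> \<omega>) / norm w" using sf(5) nw by (simp add: refl_inner[OF \<omega>])
      finally show ?thesis by (simp add: w_def inner_commute divide_inverse mult.commute)
    qed
    show ?thesis unfolding Bker_def arg1 arg2 ..
  qed
qed



definition Lc :: "nat \<Rightarrow> nat \<Rightarrow> nat \<Rightarrow> 'a::euclidean_space \<Rightarrow> 'a \<times> 'a \<Rightarrow> 'a \<times> 'a" where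
  "Lc m m1 m' \<omega> = (\<lambda>(v, v1). (post_v m m1 m' v v1 \<omega>, post_v1 m m1 m' v v1 \<omega>))"

definition Tc :: "nat \<Rightarrow> nat \<Rightarrow> nat \<Rightarrow> ('a::euclidean_space \<times> 'a) \<times> 'a \<Rightarrow> ('a \<times> 'a) \<times> 'a" where
  "Tc m m1 m' = (\<lambda>(p, \<omega>). (Lc m m1 m' \<omega> p, - \<omega>))"

lemma snd_meas_coll[measurable]: "(\<lambda>x. snd x) \<in> (NN \<Otimes>\<^sub>M sphere_measure) \<rightarrow>\<^sub>M (borel :: 'a::euclidean_space measure)"
  by (rule measurable_compose[OF measurable_snd meas_sphere_borel])

lemma Tc_meas: "Tc m m1 m' \<in> coll_space \<rightarrow>\<^sub>M (coll_space :: (('a::euclidean_space \<times> 'a) \<times> 'a) measure)"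
proof -
  have s: "(\<lambda>x. - snd x) \<in> ((NN :: ('a \<times> 'a) measure) \<Otimes>\<^sub>M sphere_measure) \<rightarrow>\<^sub>M (sphere_measure :: 'a measure)"
    by (rule measurable_compose[OF measurable_snd meas_sphere_uminus])
  have f: "(\<lambda>x. Lc m m1 m' (snd x) (fst x)) \<in> (NN \<Otimes>\<^sub>M sphere_measure) \<rightarrow>\<^sub>M (NN :: ('a \<times> 'a) measure)"
    unfolding Lc_def post_v_def post_v1_def by (simp add: split_beta') measurable
  have "(\<lambda>x. (Lc m m1 m' (snd x) (fst x), - snd x)) \<in> ((NN :: ('a \<times> 'a) measure) \<Otimes>\<^sub>M (sphere_measure :: 'a measure)) \<rightarrow>\<^sub>M ((NN :: ('a \<times> 'a) measure) \<Otimes>\<^sub>M (sphere_measure :: 'a measure))"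
    by (rule measurable_Pair[OF f s])
  then show ?thesis unfolding Tc_def coll_space_def by (simp add: split_beta')
qed

definition rc :: "nat \<Rightarrow> nat \<Rightarrow> nat \<Rightarrow> nat \<Rightarrow> real" where
  "rc d m m1 m' = 1 / (sqrt (real m * real m1) / sqrt (real m' * real (m + m1 - m'))) ^ d"

lemma pres_Lc:
  fixes \<omega> :: "'a::euclidean_space"
  assumes t: "(m, m1, m') \<in> triples" and \<omega>: "norm \<omega> = 1"
  shows "pres (Lc m m1 m' \<omega>) (ennreal (rc DIM('a) m m1 m'))"
proof -
  have tt: "1 \<le> m" "1 \<le> m1" "1 \<le> m'" "m' < m + m1" using t by (auto simp: triples_def)
  define p where "p = real m"
  define p1 where "p1 = real m1"
  define q where "q = real m'"
  define q1 where "q1 = real (m + m1 - m')"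
  have pos: "0 < p" "0 < p1" "0 < q" "0 < q1" using tt by (auto simp: p_def p1_def q_def q1_def)
  have Mq: "p + p1 = q + q1" unfolding p_def p1_def q_def q1_def using tt by simp
  define a where "a \<equiv> sqrt (p * p1) / (p + p1) * sqrt (q1 / q)"
  define b where "b \<equiv> sqrt (p * p1) / (p + p1) * sqrt (q / q1)"
  note sf = scal_facts[OF pos Mq, folded a_def b_def]
  have ce: "\<And>v v1::'a. (1 / real (m + m1)) *\<^sub>R (real m *\<^sub>R v + real m1 *\<^sub>R v1) = v - (real m1 / real (m + m1)) *\<^sub>R (v - v1)"
    using tt by (intro center_eq) simp
  have P: "pres (\<lambda>(v, v1). (v - (real m1 / real (m + m1)) *\<^sub>R (v - v1) + a *\<^sub>R refl \<omega> (v - v1),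
                        v - (real m1 / real (m + m1)) *\<^sub>R (v - v1) - b *\<^sub>R refl \<omega> (v - v1)))
              (ennreal (1 / \<bar>a + b\<bar> ^ DIM('a)))"
    using sf(5) by (intro pres_L \<omega>) simp
  show ?thesis
  proof (rule pres_cong[OF P])
    fix x :: "'a \<times> 'a"
    obtain v v1 where x: "x = (v, v1)" by (cases x)
    show "(\<lambda>(v, v1). (v - (real m1 / real (m + m1)) *\<^sub>R (v - v1) + a *\<^sub>R refl \<omega> (v - v1),
                        v - (real m1 / real (m + m1)) *\<^sub>R (v - v1) - b *\<^sub>R refl \<omega> (v - v1))) x = Lc m m1 m' \<omega> x"
      unfolding x Lc_def post_v_eq post_v1_eq ce by (simp add: a_def b_def p_def p1_def q_def q1_def)
  next
    show "ennreal (1 / \<bar>a + b\<bar> ^ DIM('a)) = ennreal (rc DIM('a) m m1 m')"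
      unfolding rc_def using sf(2) sf(5) by (simp add: p_def p1_def q_def q1_def)
  qed
qed

lemma coll_T_integral:
  fixes g :: "(('a::euclidean_space \<times> 'a) \<times> 'a) \<Rightarrow> real"
  assumes t: "(m, m1, m') \<in> triples" and g: "integrable coll_space g"
  shows "integrable coll_space (\<lambda>x. g (Tc m m1 m' x))"
    and "integral\<^sup>L coll_space (\<lambda>x. g (Tc m m1 m' x)) = rc DIM('a) m m1 m' * integral\<^sup>L coll_space g"
proof -
  have r: "0 \<le> rc DIM('a) m m1 m'" unfolding rc_def by simp
  have T: "(\<lambda>(p, \<omega>). (Lc m m1 m' \<omega> p, - \<omega>)) \<in> coll_space \<rightarrow>\<^sub>M (coll_space :: (('a \<times> 'a) \<times> 'a) measure)"
    using Tc_meas[of m m1 m'] unfolding Tc_def .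
  have P: "\<And>\<omega>::'a. \<omega> \<in> sphere 0 1 \<Longrightarrow> pres (Lc m m1 m' \<omega>) (ennreal (rc DIM('a) m m1 m'))"
    using t by (intro pres_Lc) auto
  show "integrable coll_space (\<lambda>x. g (Tc m m1 m' x))"
    using coll_integral(1)[OF T P r g] unfolding Tc_def .
  show "integral\<^sup>L coll_space (\<lambda>x. g (Tc m m1 m' x)) = rc DIM('a) m m1 m' * integral\<^sup>L coll_space g"
    using coll_integral(2)[OF T P r g] unfolding Tc_def .
qed



definition rho :: "nat \<times> nat \<times> nat \<Rightarrow> nat \<times> nat \<times> nat" where
  "rho t = (case t of (m, m1, m') \<Rightarrow> (m', m + m1 - m', m))"

lemma rho_triples: "t \<in> triples \<Longrightarrow> rho t \<in> triples"
  by (auto simp: rho_def triples_def split: prod.splits)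

lemma rho_rho: "t \<in> triples \<Longrightarrow> rho (rho t) = t"
  by (auto simp: rho_def triples_def split: prod.splits)

lemma bij_rho: "bij_betw rho triples triples"
  by (rule bij_betwI[of _ _ _ rho]) (auto simp: rho_triples rho_rho)

lemma sum_lemma:
  fixes F :: "nat \<times> nat \<times> nat \<Rightarrow> real"
  assumes F: "F summable_on triples"
  shows "(\<Sum>\<^sub>\<infinity>(m, m1)\<in>{1..} \<times> {1..}. \<Sum>m' = 1..m + m1 - 1. F (m, m1, m')) = (\<Sum>\<^sub>\<infinity>t\<in>triples. F t)"
proof -
  define g where "g = (\<lambda>((m::nat, m1::nat), m'::nat). (m, m1, m'))"
  define Sg where "Sg = Sigma ({1::nat..} \<times> {1::nat..}) (\<lambda>(m, m1). {1..m + m1 - 1})"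
  have bij: "bij_betw g Sg triples"
    by (rule bij_betwI[of _ _ _ "\<lambda>(m, m1, m'). ((m, m1), m')"]) (auto simp: g_def Sg_def triples_def)
  have s: "(\<lambda>x. F (g x)) summable_on Sg" using F by (simp add: summable_on_reindex_bij_betw[OF bij])
  have "(\<Sum>\<^sub>\<infinity>t\<in>triples. F t) = (\<Sum>\<^sub>\<infinity>x\<in>Sg. F (g x))" by (simp add: infsum_reindex_bij_betw[OF bij])
  also have "\<dots> = (\<Sum>\<^sub>\<infinity>(x, y)\<in>Sg. (\<lambda>x y. F (g (x, y))) x y)" by (rule infsum_cong) auto
  also have "\<dots> = (\<Sum>\<^sub>\<infinity>x\<in>{1..} \<times> {1..}. \<Sum>\<^sub>\<infinity>y\<in>(\<lambda>(m, m1). {1..m + m1 - 1}) x. F (g (x, y)))"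
    unfolding Sg_def by (rule infsum_Sigma'_banach[symmetric]) (use s in \<open>simp add: Sg_def case_prod_beta'\<close>)
  also have "\<dots> = (\<Sum>\<^sub>\<infinity>(m, m1)\<in>{1..} \<times> {1..}. \<Sum>m' = 1..m + m1 - 1. F (m, m1, m'))"
    by (rule infsum_cong) (auto simp: g_def)
  finally show ?thesis ..
qed



lemma sqrt_pow_powr: "0 < x \<Longrightarrow> sqrt x ^ n = x powr (real n / 2)"
proof -
  assume x: "0 < x"
  have "sqrt x ^ n = (x powr (1/2)) ^ n" using x by (simp add: powr_half_sqrt)
  also have "\<dots> = (x powr (1/2)) powr (real n)" using x by (simp add: powr_realpow)
  also have "\<dots> = x powr (real n / 2)" by (simp add: powr_powr)
  finally show ?thesis .
qed

lemma rc_cancel: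
  assumes t: "(m, m1, m') \<in> triples"
  shows "(real m * real m1) powr (real d / 2) * rc d m m1 m' / (real m' * real (m + m1 - m')) powr (real d / 2) = 1"
proof -
  have pos: "0 < real m * real m1" "0 < real m' * real (m + m1 - m')" using t by (auto simp: triples_def)
  have "rc d m m1 m' = (real m' * real (m + m1 - m')) powr (real d / 2) / (real m * real m1) powr (real d / 2)"
    unfolding rc_def power_divide sqrt_pow_powr[OF pos(1)] sqrt_pow_powr[OF pos(2)] by simp
  moreover have gen: "\<And>X Y e. 0 < X \<Longrightarrow> 0 < Y \<Longrightarrow> X powr e * (Y powr e / X powr e) / Y powr e = (1::real)"
    by simp
  ultimately show ?thesis using gen[OF pos] by (simp only:)
qed

theorem lemma2p2:
  fixes A :: "nat \<Rightarrow> nat \<Rightarrow> nat \<Rightarrow> real"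
    and B :: "real \<Rightarrow> real \<Rightarrow> real"
    and f :: "nat \<Rightarrow> real ^ 'n \<Rightarrow> real"
    and \<phi> :: "nat \<Rightarrow> real ^ 'n \<Rightarrow> real"
  assumes A_nonneg: "\<And>m m1 m'. (m, m1, m') \<in> triples \<Longrightarrow> 0 \<le> A m m1 m'"
    and A_sym: "\<And>m m1 m'. (m, m1, m') \<in> triples \<Longrightarrow> A m m1 m' = A m1 m m'"
    and A_sym2: "\<And>m m1 m'. (m, m1, m') \<in> triples \<Longrightarrow> A m m1 m' = A m m1 (m + m1 - m')"
    and B_nonneg: "\<And>r s. 0 \<le> r \<Longrightarrow> -1 \<le> s \<Longrightarrow> s \<le> 1 \<Longrightarrow> 0 \<le> B r s"
    and B_meas: "(\<lambda>(r, s). B r s) \<in> borel_measurable borel"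
    and f_meas: "\<And>m. f m \<in> borel_measurable borel"
    and \<phi>_meas: "\<And>m. \<phi> m \<in> borel_measurable borel"
    and integrable: "\<And>m m1 m'. (m, m1, m') \<in> triples \<Longrightarrow>
         set_integrable coll_space coll_dom
           (\<lambda>((v, v1), \<omega>). Bker B m m1 v v1 \<omega> * dphi \<phi> m m1 m' v v1 \<omega> * f m v * f m1 v1)"
    and summable: "(\<lambda>(m, m1, m'). A m m1 m' *
           (LINT x : coll_dom | coll_space.
              (case x of ((v, v1), \<omega>) \<Rightarrow>
                 \<bar>Bker B m m1 v v1 \<omega> * dphi \<phi> m m1 m' v v1 \<omega> * f m v * f m1 v1\<bar>)))
         summable_on triples"
  shows "weak_form A B f \<phi> = sym_form A B f \<phi>"
proof -
  let ?D = "DIM(real ^ 'n)"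
  define h where "h = (\<lambda>m m1 m' (x :: ((real ^ 'n) \<times> (real ^ 'n)) \<times> (real ^ 'n)). case x of ((v, v1), \<omega>) \<Rightarrow>
      Bker B m m1 v v1 \<omega> * dphi \<phi> m m1 m' v v1 \<omega> * f m v * f m1 v1)"
  define gain where "gain = (\<lambda>m m1 m' (x :: ((real ^ 'n) \<times> (real ^ 'n)) \<times> (real ^ 'n)). case x of ((v, v1), \<omega>) \<Rightarrow>
      Bker B m m1 v v1 \<omega> * dphi \<phi> m m1 m' v v1 \<omega> * f m' (post_v m m1 m' v v1 \<omega>) * f (m + m1 - m') (post_v1 m m1 m' v v1 \<omega>))"
  define I where "I = (\<lambda>(m, m1, m'). LINT x : coll_dom | coll_space. h m m1 m' x)"
  define F where "F = (\<lambda>t. (case t of (m, m1, m') \<Rightarrow> A m m1 m') * I t)"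
  have hint: "set_integrable coll_space coll_dom (h m m1 m')" if t: "(m, m1, m') \<in> triples" for m m1 m'
    using integrable[OF t] unfolding h_def by (simp add: case_prod_beta')
  have Fsum: "F summable_on triples"
  proof -
    let ?g = "\<lambda>(m, m1, m'). A m m1 m' *
           (LINT x : coll_dom | coll_space.
              (case x of ((v, v1), \<omega>) \<Rightarrow>
                 \<bar>Bker B m m1 v v1 \<omega> * dphi \<phi> m m1 m' v v1 \<omega> * f m v * f m1 v1\<bar>))"
    have gnn: "0 \<le> ?g t" if "t \<in> triples" for t
      using that A_nonneg
      by (auto simp: set_lebesgue_integral_def split: prod.splits intro!: mult_nonneg_nonneg integral_nonneg_AE)
    have "(\<lambda>t. norm (?g t)) summable_on triples"
      using summable by (rule summable_on_cong[THEN iffD1, rotated]) (use gnn in auto)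
    moreover have "norm (F t) \<le> norm (?g t)" if t: "t \<in> triples" for t
    proof -
      obtain m m1 m' where tt: "t = (m, m1, m')" by (cases t)
      have It: "I t = (LINT x : coll_dom | coll_space. h m m1 m' x)" by (simp add: tt I_def)
      have "norm (I t) \<le> (LINT x : coll_dom | coll_space. norm (h m m1 m' x))"
        unfolding It set_lebesgue_integral_def
      proof -
        have "norm (integral\<^sup>L coll_space (\<lambda>x. indicator coll_dom x *\<^sub>R h m m1 m' x))
           \<le> integral\<^sup>L coll_space (\<lambda>x. norm (indicator coll_dom x *\<^sub>R h m m1 m' x))"
          by (rule integral_norm_bound)
        also have "(\<lambda>x. norm (indicator coll_dom x *\<^sub>R h m m1 m' x)) = (\<lambda>x. indicator coll_dom x *\<^sub>R norm (h m m1 m' x))"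
          by (auto simp: indicator_def fun_eq_iff)
        finally show "norm (integral\<^sup>L coll_space (\<lambda>x. indicator coll_dom x *\<^sub>R h m m1 m' x))
           \<le> integral\<^sup>L coll_space (\<lambda>x. indicator coll_dom x *\<^sub>R norm (h m m1 m' x))" .
      qed
      also have "\<dots> = (LINT x : coll_dom | coll_space.
              (case x of ((v, v1), \<omega>) \<Rightarrow>
                 \<bar>Bker B m m1 v v1 \<omega> * dphi \<phi> m m1 m' v v1 \<omega> * f m v * f m1 v1\<bar>))"
        unfolding h_def by (simp add: split_beta')
      finally have nb: "norm (I t) \<le> \<dots>" .
      define L where "L = (LINT x : coll_dom | coll_space.
              (case x of ((v, v1), \<omega>) \<Rightarrow>
                 \<bar>Bker B m m1 v v1 \<omega> * dphi \<phi> m m1 m' v v1 \<omega> * f m v * f m1 v1\<bar>))"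
      have gL: "?g t = A m m1 m' * L" unfolding tt L_def by simp
      have L0: "0 \<le> L" unfolding L_def set_lebesgue_integral_def
        by (rule integral_nonneg_AE) (auto simp: indicator_def split: prod.splits)
      have A0: "0 \<le> A m m1 m'" using A_nonneg t tt by simp
      have "norm (F t) = A m m1 m' * norm (I t)" unfolding F_def tt using A0 by (simp add: abs_mult)
      also have "\<dots> \<le> A m m1 m' * L" using nb A0 unfolding L_def by (rule mult_left_mono)
      also have "\<dots> = norm (?g t)" unfolding gL using A0 L0 by simp
      finally show ?thesis .
    qed
    ultimately have "(\<lambda>t. norm (F t)) summable_on triples" by (rule Infinite_Sum.abs_summable_on_comparison_test)
    then show ?thesis by (rule abs_summable_summable)
  qed
  have gainI: "set_integrable coll_space coll_dom (gain m m1 m') \<and>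
      (LINT x : coll_dom | coll_space. gain m m1 m' x) = - rc ?D m m1 m' * I (rho (m, m1, m'))"
    if t: "(m, m1, m') \<in> triples" for m m1 m'
  proof -
    define mm where "mm = m + m1 - m'"
    have r: "rho (m, m1, m') = (m', mm, m)" by (simp add: rho_def mm_def)
    have t': "(m', mm, m) \<in> triples" using rho_triples[OF t] r by simp
    let ?H = "\<lambda>y. indicator coll_dom y *\<^sub>R h m' mm m y"
    have Hi: "integrable coll_space ?H" using hint[OF t'] unfolding set_integrable_def .
    note CT = coll_T_integral[OF t Hi]
    have pw: "indicator coll_dom x *\<^sub>R gain m m1 m' x = - ?H (Tc m m1 m' x)"
      if x: "x \<in> space coll_space" for x
    proof -
      obtain v v1 \<omega> where xx: "x = ((v, v1), \<omega>)" by (cases x) auto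
      have \<omega>: "norm \<omega> = 1" using x unfolding xx coll_space_def by (simp add: space_pair_measure space_sphere_measure)
      note cr = coll_rev[OF t \<omega>, folded mm_def]
      have Tx: "Tc m m1 m' ((v, v1), \<omega>) = ((post_v m m1 m' v v1 \<omega>, post_v1 m m1 m' v v1 \<omega>), - \<omega>)"
        unfolding Tc_def Lc_def by simp
      have ind: "indicator coll_dom (Tc m m1 m' x) = (indicator coll_dom x :: real)"
        unfolding xx Tx coll_dom_def using cr(5) by (simp add: indicator_def)
      have dp: "dphi \<phi> m' mm m (post_v m m1 m' v v1 \<omega>) (post_v1 m m1 m' v v1 \<omega>) (- \<omega>) = - dphi \<phi> m m1 m' v v1 \<omega>"
        unfolding dphi_def cr(1) cr(2) cr(3) by (simp add: mm_def)
      show ?thesis unfolding ind unfolding xx Tx h_def gain_def using cr(4) dp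
        by (simp add: mm_def)
    qed
    have gi: "integrable coll_space (\<lambda>x. indicator coll_dom x *\<^sub>R gain m m1 m' x)"
    proof -
      have "integrable coll_space (\<lambda>x. indicator coll_dom x *\<^sub>R gain m m1 m' x) \<longleftrightarrow>
          integrable coll_space (\<lambda>x. - ?H (Tc m m1 m' x))"
        by (rule Bochner_Integration.integrable_cong[OF refl]) (rule pw)
      then show ?thesis using integrable_minus[OF CT(1)] by simp
    qed
    have "(LINT x : coll_dom | coll_space. gain m m1 m' x) = integral\<^sup>L coll_space (\<lambda>x. - ?H (Tc m m1 m' x))"
      unfolding set_lebesgue_integral_def by (rule Bochner_Integration.integral_cong[OF refl]) (rule pw)
    also have "\<dots> = - rc ?D m m1 m' * integral\<^sup>L coll_space ?H" using CT(2) by simp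
    also have "integral\<^sup>L coll_space ?H = I (rho (m, m1, m'))" unfolding r I_def set_lebesgue_integral_def by simp
    finally show ?thesis using gi unfolding set_integrable_def by simp
  qed
  have symterm: "(real m * real m1) powr (real ?D / 2) *
        (LINT x : coll_dom | coll_space.
           (case x of ((v, v1), \<omega>) \<Rightarrow>
              Bker B m m1 v v1 \<omega> * dphi \<phi> m m1 m' v v1 \<omega> *
              (A m' (m + m1 - m') m / (real m' * real (m + m1 - m')) powr (real ?D / 2)
                 * f m' (post_v m m1 m' v v1 \<omega>) * f (m + m1 - m') (post_v1 m m1 m' v v1 \<omega>)
               - A m m1 m' / (real m * real m1) powr (real ?D / 2) * f m v * f m1 v1)))
      = - (F (rho (m, m1, m')) + F (m, m1, m'))" if t: "(m, m1, m') \<in> triples" for m m1 m'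
  proof -
    define C1 where "C1 = A m' (m + m1 - m') m / (real m' * real (m + m1 - m')) powr (real ?D / 2)"
    define C2 where "C2 = A m m1 m' / (real m * real m1) powr (real ?D / 2)"
    have pos: "0 < real m * real m1" using t by (auto simp: triples_def)
    note G = gainI[OF t]
    have "(LINT x : coll_dom | coll_space.
           (case x of ((v, v1), \<omega>) \<Rightarrow>
              Bker B m m1 v v1 \<omega> * dphi \<phi> m m1 m' v v1 \<omega> *
              (C1 * f m' (post_v m m1 m' v v1 \<omega>) * f (m + m1 - m') (post_v1 m m1 m' v v1 \<omega>)
               - C2 * f m v * f m1 v1)))
        = (LINT x : coll_dom | coll_space. C1 * gain m m1 m' x - C2 * h m m1 m' x)"
      unfolding gain_def h_def by (rule arg_cong[where f="set_lebesgue_integral _ _"]) (auto simp: fun_eq_iff algebra_simps split: prod.splits)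
    also have "\<dots> = C1 * (LINT x : coll_dom | coll_space. gain m m1 m' x) - C2 * (LINT x : coll_dom | coll_space. h m m1 m' x)"
      using G hint[OF t] by (simp add: set_integral_diff)
    also have "\<dots> = - C1 * rc ?D m m1 m' * I (rho (m, m1, m')) - C2 * I (m, m1, m')"
      using G by (simp add: I_def)
    finally have e: "(LINT x : coll_dom | coll_space.
           (case x of ((v, v1), \<omega>) \<Rightarrow>
              Bker B m m1 v v1 \<omega> * dphi \<phi> m m1 m' v v1 \<omega> *
              (C1 * f m' (post_v m m1 m' v v1 \<omega>) * f (m + m1 - m') (post_v1 m m1 m' v v1 \<omega>)
               - C2 * f m v * f m1 v1))) = - C1 * rc ?D m m1 m' * I (rho (m, m1, m')) - C2 * I (m, m1, m')" .
    have k1: "(real m * real m1) powr (real ?D / 2) * C1 * rc ?D m m1 m' = A m' (m + m1 - m') m"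
    proof -
      have gen: "\<And>X Y R A'::real. X * R / Y = 1 \<Longrightarrow> X * (A' / Y) * R = A'"
      proof -
        fix X Y R A' :: real assume "X * R / Y = 1"
        moreover have "X * (A' / Y) * R = A' * (X * R / Y)" by (simp add: divide_inverse mult_ac)
        ultimately show "X * (A' / Y) * R = A'" by (simp only: mult_1_right)
      qed
      show ?thesis unfolding C1_def by (rule gen[OF rc_cancel[OF t]])
    qed
    have k2: "(real m * real m1) powr (real ?D / 2) * C2 = A m m1 m'"
    proof -
      have "m \<noteq> 0" "m1 \<noteq> 0" using t by (auto simp: triples_def)
      then show ?thesis unfolding C2_def by simp
    qed
    have "(real m * real m1) powr (real ?D / 2) * (- C1 * rc ?D m m1 m' * I (rho (m, m1, m')) - C2 * I (m, m1, m'))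
        = - (((real m * real m1) powr (real ?D / 2) * C1 * rc ?D m m1 m') * I (rho (m, m1, m')))
          - ((real m * real m1) powr (real ?D / 2) * C2) * I (m, m1, m')"
      by (simp add: algebra_simps)
    also have "\<dots> = - (F (rho (m, m1, m')) + F (m, m1, m'))"
      unfolding k1 k2 F_def by (simp add: rho_def)
    finally show ?thesis using e unfolding C1_def C2_def by simp
  qed
  have weak: "weak_form A B f \<phi> = 1/2 * (\<Sum>\<^sub>\<infinity>t\<in>triples. F t)"
    unfolding weak_form_def sum_lemma[OF Fsum, symmetric]
    by (rule arg_cong[where f="\<lambda>x. 1/2 * x"], rule infsum_cong)
       (auto simp: F_def I_def h_def intro!: sum.cong)
  have Gsum: "(\<lambda>t. - (F (rho t) + F t)) summable_on triples"
  proof -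
    have "(\<lambda>t. F (rho t)) summable_on triples" using Fsum by (simp add: summable_on_reindex_bij_betw[OF bij_rho])
    then have "(\<lambda>t. F (rho t) + F t) summable_on triples" using Fsum by (rule summable_on_add)
    then show ?thesis by (subst summable_on_uminus)
  qed
  have "sym_form A B f \<phi> = - 1/4 * (\<Sum>\<^sub>\<infinity>(m, m1)\<in>{1..} \<times> {1..}. \<Sum>m' = 1..m + m1 - 1. - (F (rho (m, m1, m')) + F (m, m1, m')))"
    unfolding sym_form_def
    apply (rule arg_cong[where f="\<lambda>x. - 1/4 * x"])
    apply (rule infsum_cong)
    apply (clarify)
    apply (rule sum.cong)
     apply (rule refl)
    apply (rule symterm)
    apply (auto simp: triples_def)
    done
  also have "\<dots> = - 1/4 * (\<Sum>\<^sub>\<infinity>t\<in>triples. - (F (rho t) + F t))"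
    using sum_lemma[OF Gsum] by simp
  also have "(\<Sum>\<^sub>\<infinity>t\<in>triples. - (F (rho t) + F t)) = - ((\<Sum>\<^sub>\<infinity>t\<in>triples. F (rho t)) + (\<Sum>\<^sub>\<infinity>t\<in>triples. F t))"
  proof -
    have s1: "(\<lambda>t. F (rho t)) summable_on triples" using Fsum by (simp add: summable_on_reindex_bij_betw[OF bij_rho])
    show ?thesis by (simp only: infsum_uminus infsum_add[OF s1 Fsum])
  qed
  also have "(\<Sum>\<^sub>\<infinity>t\<in>triples. F (rho t)) = (\<Sum>\<^sub>\<infinity>t\<in>triples. F t)" by (rule infsum_reindex_bij_betw[OF bij_rho])
  finally show ?thesis using weak by simp
qed

end
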